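(* Let $H$ be an $r$-uniform hypergraph on $n$ vertices with average degree $d$. Let $s(H)$ be defined by $$\mathrm{bw}(H)=\frac{nd}{r}\left(1-2^{1-r}\right)-s(H).$$ Then $\mathrm{disc}^{+}(H)\geq \frac{s(H)}{2}$.
   Context: An equipartition of a finite set is a partition into two parts whose sizes differ by at most one. A bisection of $H$ is an equipartition $V(H)=X\cup Y$ together with all edges containing at least one vertex in each part; its size is the number of such edges, and $\mathrm{bw}(H)$ is the minimum size of a bisection. The average degree is $d=r|E(H)|/n$. With edge density $p=|E(H)|/\binom{n}{r}$, for $U\subset V(H)$ let $e(U)$ be the number of edges contained in $U$ and $\mathrm{disc}(U)=e(U)-p\binom{|U|}{r}$; the positive discrepancy is $\mathrm{disc}^{+}(H)=\max_{U\subset V(H)}\mathrm{disc}(U)$. *)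

theory Defs
  imports Complex_Main
begin

definition uniform_hypergraph :: "nat \<Rightarrow> 'a set \<Rightarrow> 'a set set \<Rightarrow> bool" where
  "uniform_hypergraph r V E \<longleftrightarrow> finite V \<and> (\<forall>e\<in>E. e \<subseteq> V \<and> card e = r)"

definition equipartition :: "'a set \<Rightarrow> 'a set \<Rightarrow> 'a set \<Rightarrow> bool" where
  "equipartition V X Y \<longleftrightarrow> X \<union> Y = V \<and> X \<inter> Y = {} \<and>
     \<bar>int (card X) - int (card Y)\<bar> \<le> 1"

definition bisection_size :: "'a set set \<Rightarrow> 'a set \<Rightarrow> 'a set \<Rightarrow> nat" where
  "bisection_size E X Y = card {e\<in>E. e \<inter> X \<noteq> {} \<and> e \<inter> Y \<noteq> {}}"

definition bw :: "'a set \<Rightarrow> 'a set set \<Rightarrow> nat" where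
  "bw V E = Min {bisection_size E X Y | X Y. equipartition V X Y}"

definition avg_degree :: "nat \<Rightarrow> 'a set \<Rightarrow> 'a set set \<Rightarrow> real" where
  "avg_degree r V E = real r * real (card E) / real (card V)"

definition edge_density :: "nat \<Rightarrow> 'a set \<Rightarrow> 'a set set \<Rightarrow> real" where
  "edge_density r V E = real (card E) / real (card V choose r)"

definition edges_in :: "'a set set \<Rightarrow> 'a set \<Rightarrow> nat" where
  "edges_in E U = card {e\<in>E. e \<subseteq> U}"

definition disc :: "nat \<Rightarrow> 'a set \<Rightarrow> 'a set set \<Rightarrow> 'a set \<Rightarrow> real" where
  "disc r V E U = real (edges_in E U) - edge_density r V E * real (card U choose r)"

definition disc_plus :: "nat \<Rightarrow> 'a set \<Rightarrow> 'a set set \<Rightarrow> real" where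
  "disc_plus r V E = Max {disc r V E U | U. U \<subseteq> V}"

definition s_param :: "nat \<Rightarrow> 'a set \<Rightarrow> 'a set set \<Rightarrow> real" where
  "s_param r V E = real (card V) * avg_degree r V E / real r * (1 - 2 powr (1 - real r))
     - real (bw V E)"

end

theory Submission
  imports Defs
begin

lemma choose_step: "Suc r * (k choose Suc r) = (k - r) * (k choose r)"
  by (metis binomial_absorption binomial_absorb_comp)

lemma key_choose:
  fixes n k r :: nat
  assumes "2*k \<le> n+1" "1 \<le> r"
  shows "n * 2^(r-1) * (k choose r) \<le> k * (n choose r)"
  using assms(2)
proof (induction r rule: dec_induct)
  case base
  then show ?case by simp
next
  case (step r)
  have "Suc r * (n * 2^(Suc r - 1) * (k choose Suc r)) = 2 * (k - r) * (n * 2^(r-1) * (k choose r))"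
  proof -
    have p: "(2::nat)^(Suc r - 1) = 2 * 2^(r-1)" using step(1) by (cases r) auto
    have "Suc r * (n * 2^(Suc r - 1) * (k choose Suc r)) = n * 2^(Suc r - 1) * (Suc r * (k choose Suc r))"
      by (simp add: algebra_simps)
    also have "\<dots> = n * (2 * 2^(r-1)) * ((k - r) * (k choose r))" by (simp only: p choose_step)
    finally show ?thesis by (simp add: algebra_simps)
  qed
  also have "\<dots> \<le> (n - r) * (k * (n choose r))"
    using step(3) assms(1) step(1)
    by (intro mult_mono[of "2 * (k - r)" "n - r" "n * 2^(r-1) * (k choose r)" "k * (n choose r)"]) auto
  also have "\<dots> = Suc r * (k * (n choose Suc r))"
    using choose_step[of r n] by (simp add: algebra_simps)
  finally show ?case by (simp only: mult_le_cancel1)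
qed

lemma key_sum:
  fixes a b r :: nat
  assumes "\<bar>int a - int b\<bar> \<le> 1" "1 \<le> r"
  shows "((a choose r) + (b choose r)) * 2^(r-1) \<le> ((a+b) choose r)"
proof -
  have 1: "(a+b) * 2^(r-1) * (a choose r) \<le> a * ((a+b) choose r)"
    using assms by (intro key_choose) auto
  have 2: "(a+b) * 2^(r-1) * (b choose r) \<le> b * ((a+b) choose r)"
    using assms by (intro key_choose) auto
  have "(a+b) * (((a choose r) + (b choose r)) * 2^(r-1)) \<le> (a+b) * ((a+b) choose r)"
    using add_mono[OF 1 2] by (simp add: algebra_simps)
  moreover have "a + b = 0 \<Longrightarrow> ?thesis" using assms by (cases r) auto
  ultimately show ?thesis by (cases "a+b = 0") auto
qed

lemma powr_aux: "1 \<le> r \<Longrightarrow> (2::real) powr (1 - real r) = 1 / 2^(r-1)"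
proof -
  assume "1 \<le> r"
  then have "1 - real r = - real (r - 1)" by (simp add: of_nat_diff)
  then have "(2::real) powr (1 - real r) = 2 powr (- real (r - 1))" by (simp only:)
  also have "\<dots> = inverse (2 powr (real (r - 1)))" by (rule powr_minus)
  also have "(2::real) powr (real (r - 1)) = 2 ^ (r - 1)" by (rule powr_realpow) simp
  finally show ?thesis by (simp add: divide_inverse)
qed

theorem lemma1p4:
  fixes r :: nat and V :: "'a set" and E :: "'a set set"
  assumes "uniform_hypergraph r V E"
  shows "disc_plus r V E \<ge> s_param r V E / 2"
proof -
  have finV: "finite V" and edg: "\<And>e. e \<in> E \<Longrightarrow> e \<subseteq> V \<and> card e = r"
    using assms unfolding uniform_hypergraph_def by auto
  have finE: "finite E"
  proof -
    have "E \<subseteq> Pow V" using edg by auto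
    then show ?thesis using finV by (simp add: finite_subset)
  qed
  have dset: "{disc r V E U | U. U \<subseteq> V} = disc r V E ` Pow V" by auto
  have ge: "disc r V E U \<le> disc_plus r V E" if "U \<subseteq> V" for U
    unfolding disc_plus_def dset using that finV by (intro Max_ge) auto
  have disc0: "disc r V E {} = 0"
  proof (cases "r = 0")
    case True
    have "e = {}" if "e \<in> E" for e
      using edg[OF that] finV True by (metis card_0_eq finite_subset)
    then have "{e\<in>E. e \<subseteq> {}} = E" by auto
    then have "edges_in E {} = card E" unfolding edges_in_def by simp
    then show ?thesis using True by (simp add: disc_def edge_density_def)
  next
    case False
    have "{e\<in>E. e \<subseteq> {}} = {}"
      using edg False by fastforce
    then have "edges_in E {} = 0" unfolding edges_in_def by simp
    then show ?thesis using False by (simp add: disc_def edge_density_def)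
  qed
  have dp0: "disc_plus r V E \<ge> 0" using ge[of "{}"] disc0 by simp
  have bw0: "real (bw V E) \<ge> 0" by simp
  show ?thesis
  proof (cases "r = 0")
    case True
    then show ?thesis using dp0 by (simp add: s_param_def)
  next
    case False
    then have r1: "1 \<le> r" by simp
    let ?n = "card V"
    let ?m = "real (card E)"
    have T: "real ?n * avg_degree r V E / real r = ?m"
    proof (cases "?n = 0")
      case True
      then have "V = {}" using finV by simp
      then have "E = {}" using edg False by fastforce
      then show ?thesis by (simp add: avg_degree_def)
    next
      case False
      then show ?thesis using r1 by (simp add: avg_degree_def)
    qed
    define S where "S = {bisection_size E X Y | X Y. equipartition V X Y}"
    have "S \<subseteq> {..card E}"
      unfolding S_def bisection_size_def using finE by (auto intro!: card_mono)
    then have finS: "finite S" by (rule finite_subset) simp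
    obtain X0 where X0: "X0 \<subseteq> V" "card X0 = ?n div 2"
      using obtain_subset_with_card_n[of "?n div 2" V] by auto
    have "card (V - X0) = ?n - ?n div 2" using X0 finV by (simp add: card_Diff_subset finite_subset)
    then have "equipartition V X0 (V - X0)"
      unfolding equipartition_def using X0 by auto
    then have "S \<noteq> {}" unfolding S_def by blast
    then have "bw V E \<in> S" unfolding bw_def S_def[symmetric] using finS by (simp add: Min_in)
    then obtain X Y where eq: "equipartition V X Y" and bweq: "bw V E = bisection_size E X Y"
      unfolding S_def by auto
    have XY: "X \<union> Y = V" "X \<inter> Y = {}" "\<bar>int (card X) - int (card Y)\<bar> \<le> 1"
      using eq unfolding equipartition_def by auto
    have finX: "finite X" "finite Y" using XY finV by auto
    have "card (X \<union> Y) = card X + card Y" by (rule card_Un_disjoint) (use finX XY in auto)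
    then have cardn: "card X + card Y = ?n" using XY(1) by simp
    have "E \<subseteq> {e\<in>E. e \<inter> X \<noteq> {} \<and> e \<inter> Y \<noteq> {}} \<union> {e\<in>E. e \<subseteq> X} \<union> {e\<in>E. e \<subseteq> Y}"
    proof
      fix e assume e: "e \<in> E"
      then have "e \<subseteq> X \<union> Y" using edg XY(1) by auto
      then show "e \<in> {e\<in>E. e \<inter> X \<noteq> {} \<and> e \<inter> Y \<noteq> {}} \<union> {e\<in>E. e \<subseteq> X} \<union> {e\<in>E. e \<subseteq> Y}"
        using e by auto
    qed
    then have "card E \<le> card ({e\<in>E. e \<inter> X \<noteq> {} \<and> e \<inter> Y \<noteq> {}} \<union> {e\<in>E. e \<subseteq> X} \<union> {e\<in>E. e \<subseteq> Y})"
      using finE by (intro card_mono) auto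
    also have "\<dots> \<le> card ({e\<in>E. e \<inter> X \<noteq> {} \<and> e \<inter> Y \<noteq> {}} \<union> {e\<in>E. e \<subseteq> X}) + card {e\<in>E. e \<subseteq> Y}"
      by (rule card_Un_le)
    also have "\<dots> \<le> card {e\<in>E. e \<inter> X \<noteq> {} \<and> e \<inter> Y \<noteq> {}} + card {e\<in>E. e \<subseteq> X} + card {e\<in>E. e \<subseteq> Y}"
      using card_Un_le by (rule add_right_mono)
    also have "\<dots> = bw V E + edges_in E X + edges_in E Y"
      unfolding bweq bisection_size_def edges_in_def by simp
    finally have cE: "?m \<le> real (bw V E) + real (edges_in E X) + real (edges_in E Y)" by linarith
    let ?p = "edge_density r V E"
    let ?CX = "real (card X choose r)"
    let ?CY = "real (card Y choose r)"
    have ks: "((card X choose r) + (card Y choose r)) * 2^(r-1) \<le> (?n choose r)"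
      using key_sum[OF XY(3) r1] cardn by simp
    have pb: "?p * (?CX + ?CY) \<le> ?m * (2 powr (1 - real r))"
    proof (cases "?n choose r = 0")
      case True
      have "?p = 0" by (simp only: edge_density_def True) simp
      then show ?thesis by simp
    next
      case False
      have "real ((card X choose r) + (card Y choose r)) * 2^(r-1) \<le> real (?n choose r)"
      proof -
        have "real (((card X choose r) + (card Y choose r)) * 2^(r-1)) \<le> real (?n choose r)"
          using ks by (simp only: of_nat_le_iff)
        then show ?thesis by simp
      qed
      then have "(?CX + ?CY) / real (?n choose r) \<le> 1 / 2^(r-1)"
        using False by (simp add: field_simps)
      then have "?m * ((?CX + ?CY) / real (?n choose r)) \<le> ?m * (1 / 2^(r-1))"
        by (intro mult_left_mono) auto
      then show ?thesis using powr_aux[OF r1] by (simp add: edge_density_def)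
    qed
    have "disc r V E X + disc r V E Y \<le> 2 * disc_plus r V E"
      using ge[of X] ge[of Y] XY(1) by auto
    moreover have "disc r V E X + disc r V E Y = real (edges_in E X) + real (edges_in E Y) - ?p * (?CX + ?CY)"
      unfolding disc_def by (simp add: algebra_simps)
    moreover have "s_param r V E = ?m * (1 - 2 powr (1 - real r)) - real (bw V E)"
      unfolding s_param_def T by simp
    ultimately show ?thesis using cE pb by (simp add: algebra_simps)
  qed
qed

end
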